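(* Let $\mathfrak{L}_3(\alpha_1,\beta_1,\gamma_1,\alpha_2,\beta_2,\gamma_2):=P(Z(\alpha_1,\beta_1,\gamma_1),Y(\alpha_2,\beta_2,\gamma_2))$ for $(\alpha_i,\beta_i,\gamma_i)\in(-\pi,\pi]\times(0,\pi)\times(-\pi,\pi]$, $i=1,2$. Then no point with $\alpha_2=\gamma_2=0$ is a critical point of $\mathfrak{L}_3$, i.e. the gradient of $\mathfrak{L}_3$ with respect to all variables is nonzero at every such point.
   Context: Basis of $\mathbb C^3$: $|1\rangle,|2\rangle,|3\rangle$ (standard basis). Spin-1 matrices in this basis: $J_y=\frac{1}{\sqrt2}\begin{pmatrix}0&-i&0\\ i&0&-i\\ 0&i&0\end{pmatrix}$, $J_z=\mathrm{diag}(1,0,-1)$. Define $Z(\alpha,\beta,\gamma)=e^{-i\alpha J_z}e^{-i\beta J_y}e^{-i\gamma J_z}$ and $Y(\alpha,\beta,\gamma)=e^{-i\alpha J_y}e^{-i\beta J_z}e^{-i\gamma J_y}$. Let $\mathcal R=\{Z(\alpha,\beta,\gamma):\alpha,\beta,\gamma\in\mathbb R\}\subset U(3)$. For $j\in\{1,2\}$ let $P_j=|j\rangle\langle j|$ and $\mathcal M_j(\rho)=P_j\rho P_j+(\mathbb I-P_j)\rho(\mathbb I-P_j)$. Define $P(U_1,U_2)=\langle 2|U_2\,\mathcal M_1(U_1|1\rangle\langle 1|U_1^\dagger)\,U_2^\dagger|2\rangle$ for $U_1,U_2\in\mathcal R$. *)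

theory Defs
  imports "HOL-Analysis.Analysis" "Jordan_Normal_Form.Matrix"
begin

text \<open>Basis vectors |1>,|2>,|3> of C^3 correspond to indices 0,1,2 of 3x3 matrices.\<close>

definition Jy :: "complex mat" where
  "Jy = mat_of_rows_list 3
     [[0, - \<i> / sqrt 2, 0],
      [\<i> / sqrt 2, 0, - \<i> / sqrt 2],
      [0, \<i> / sqrt 2, 0]]"

definition Jz :: "complex mat" where
  "Jz = mat_of_rows_list 3 [[1, 0, 0], [0, 0, 0], [0, 0, -1]]"

definition mexp :: "complex mat \<Rightarrow> complex mat" where
  "mexp A = mat (dim_row A) (dim_col A)
     (\<lambda>(i, j). (\<Sum>n. (A ^\<^sub>m n) $$ (i, j) / of_nat (fact n)))"

definition adj :: "complex mat \<Rightarrow> complex mat" where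
  "adj A = mat (dim_col A) (dim_row A) (\<lambda>(i, j). cnj (A $$ (j, i)))"

definition Zrot :: "real \<Rightarrow> real \<Rightarrow> real \<Rightarrow> complex mat" where
  "Zrot a b c = mexp ((- \<i> * of_real a) \<cdot>\<^sub>m Jz) * mexp ((- \<i> * of_real b) \<cdot>\<^sub>m Jy)
                * mexp ((- \<i> * of_real c) \<cdot>\<^sub>m Jz)"

definition Yrot :: "real \<Rightarrow> real \<Rightarrow> real \<Rightarrow> complex mat" where
  "Yrot a b c = mexp ((- \<i> * of_real a) \<cdot>\<^sub>m Jy) * mexp ((- \<i> * of_real b) \<cdot>\<^sub>m Jz)
                * mexp ((- \<i> * of_real c) \<cdot>\<^sub>m Jy)"

text \<open>proj k = |k+1><k+1| (0-based index k).\<close>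
definition proj :: "nat \<Rightarrow> complex mat" where
  "proj k = mat 3 3 (\<lambda>(a, b). if a = k \<and> b = k then 1 else 0)"

text \<open>The measurement channel M_j, with 0-based index k = j - 1.\<close>
definition meas :: "nat \<Rightarrow> complex mat \<Rightarrow> complex mat" where
  "meas k \<rho> = proj k * \<rho> * proj k + (1\<^sub>m 3 - proj k) * \<rho> * (1\<^sub>m 3 - proj k)"

definition Pfun :: "complex mat \<Rightarrow> complex mat \<Rightarrow> complex" where
  "Pfun U1 U2 = (U2 * meas 0 (U1 * proj 0 * adj U1) * adj U2) $$ (1, 1)"

text \<open>L_3 as a function of x = (alpha1, beta1, gamma1, alpha2, beta2, gamma2),
  stored in components x$1,...,x$6 of a vector in R^6.\<close>
definition L3 :: "real^6 \<Rightarrow> complex" where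
  "L3 x = Pfun (Zrot (x$1) (x$2) (x$3)) (Yrot (x$4) (x$5) (x$6))"

end

theory Submission
  imports Defs
begin

lemma s2c: "complex_of_real (sqrt 2) * complex_of_real (sqrt 2) = 2"
  by (simp flip: of_real_mult)

lemma s2c': "complex_of_real (sqrt 2) * (complex_of_real (sqrt 2) * x) = 2 * x"
  by (simp add: mult.assoc[symmetric] s2c)
lemma s2nz: "complex_of_real (sqrt 2) \<noteq> 0" by simp

lemma Jy_dim[simp]: "dim_row Jy = 3" "dim_col Jy = 3" by (simp_all add: Jy_def mat_of_rows_list_def)
lemma Jz_dim[simp]: "dim_row Jz = 3" "dim_col Jz = 3" by (simp_all add: Jz_def mat_of_rows_list_def)
lemma less3: "(i::nat) < 3 \<longleftrightarrow> i = 0 \<or> i = 1 \<or> i = 2" by auto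

definition "Pp = mat_of_rows_list 3
     [[1/4, - \<i> / (2 * sqrt 2), -1/4],
      [\<i> / (2 * sqrt 2), 1/2, - \<i> / (2 * sqrt 2)],
      [-1/4, \<i> / (2 * sqrt 2), 1/4::complex]]"
definition "Pm = mat_of_rows_list 3
     [[1/4, \<i> / (2 * sqrt 2), -1/4],
      [- \<i> / (2 * sqrt 2), 1/2, \<i> / (2 * sqrt 2)],
      [-1/4, - \<i> / (2 * sqrt 2), 1/4::complex]]"
definition "P0 = mat_of_rows_list 3
     [[1/2, 0, 1/2],
      [0, 0, 0],
      [1/2, 0, 1/2::complex]]"

lemma Jy_pow: "((z::complex) \<cdot>\<^sub>m Jy) ^\<^sub>m n = z^n \<cdot>\<^sub>m Pp + (-z)^n \<cdot>\<^sub>m Pm + 0^n \<cdot>\<^sub>m P0"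
proof (induction n)
  case 0
  show ?case
    by (rule eq_matI) (auto simp: Pp_def Pm_def P0_def mat_of_rows_list_def less_Suc_eq numeral_3_eq_3)
next
  case (Suc n)
  have "(z \<cdot>\<^sub>m Jy) ^\<^sub>m Suc n = (z^n \<cdot>\<^sub>m Pp + (-z)^n \<cdot>\<^sub>m Pm + 0^n \<cdot>\<^sub>m P0) * (z \<cdot>\<^sub>m Jy)"
    using Suc by simp
  also have "\<dots> = z^Suc n \<cdot>\<^sub>m Pp + (-z)^Suc n \<cdot>\<^sub>m Pm + 0^Suc n \<cdot>\<^sub>m P0"
    apply (rule eq_matI)
    apply (auto simp: Pp_def Pm_def P0_def Jy_def mat_of_rows_list_def less_Suc_eq scalar_prod_def numeral_3_eq_3 lessThan_Suc)
    apply (auto simp: field_simps s2c s2c')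
    done
  finally show ?case .
qed

definition "Qp = mat_of_rows_list 3 [[1,0,0],[0,0,0],[0,0,0::complex]]"
definition "Qm = mat_of_rows_list 3 [[0,0,0],[0,0,0],[0,0,1::complex]]"
definition "Q0 = mat_of_rows_list 3 [[0,0,0],[0,1,0],[0,0,0::complex]]"

lemma Jz_pow: "((z::complex) \<cdot>\<^sub>m Jz) ^\<^sub>m n = z^n \<cdot>\<^sub>m Qp + (-z)^n \<cdot>\<^sub>m Qm + 0^n \<cdot>\<^sub>m Q0"
proof (induction n)
  case 0
  show ?case
    by (rule eq_matI) (auto simp: Qp_def Qm_def Q0_def mat_of_rows_list_def less_Suc_eq numeral_3_eq_3)
next
  case (Suc n)
  have "(z \<cdot>\<^sub>m Jz) ^\<^sub>m Suc n = (z^n \<cdot>\<^sub>m Qp + (-z)^n \<cdot>\<^sub>m Qm + 0^n \<cdot>\<^sub>m Q0) * (z \<cdot>\<^sub>m Jz)"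
    using Suc by simp
  also have "\<dots> = z^Suc n \<cdot>\<^sub>m Qp + (-z)^Suc n \<cdot>\<^sub>m Qm + 0^Suc n \<cdot>\<^sub>m Q0"
    apply (rule eq_matI)
    apply (auto simp: Qp_def Qm_def Q0_def Jz_def mat_of_rows_list_def less_Suc_eq scalar_prod_def numeral_3_eq_3 lessThan_Suc)
    done
  finally show ?case .
qed

lemma exp_sums': "(\<lambda>n. w^n / of_nat (fact n)) sums exp (w::complex)"
proof -
  have "(\<lambda>n. w ^ n /\<^sub>R fact n) sums exp w" by (rule exp_converges)
  moreover have "\<And>n. w ^ n /\<^sub>R fact n = w^n / of_nat (fact n)"
    by (simp add: scaleR_conv_of_real divide_inverse mult.commute)
  ultimately show ?thesis by simp
qed

lemma mexp_split:
  assumes d: "dim_row M = 3" "dim_col M = 3"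
    and p: "\<And>n. M ^\<^sub>m n = z^n \<cdot>\<^sub>m A + (-z)^n \<cdot>\<^sub>m B + 0^n \<cdot>\<^sub>m C"
    and c: "A \<in> carrier_mat 3 3" "B \<in> carrier_mat 3 3" "C \<in> carrier_mat 3 3"
  shows "mexp M = exp z \<cdot>\<^sub>m A + exp (-z) \<cdot>\<^sub>m B + C"
proof (rule eq_matI)
  fix i j assume ij: "i < dim_row (exp z \<cdot>\<^sub>m A + exp (-z) \<cdot>\<^sub>m B + C)" "j < dim_col (exp z \<cdot>\<^sub>m A + exp (-z) \<cdot>\<^sub>m B + C)"
  hence i: "i < 3" and j: "j < 3" using c by auto
  have e: "(M ^\<^sub>m n) $$ (i,j) / of_nat (fact n) = A $$ (i,j) * (z^n / of_nat (fact n)) + B $$ (i,j) * ((-z)^n / of_nat (fact n)) + C $$ (i,j) * (0^n / of_nat (fact n))" for n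
    using c i j by (simp add: p algebra_simps add_divide_distrib)
  have "(\<lambda>n. (M ^\<^sub>m n) $$ (i,j) / of_nat (fact n)) sums (A $$ (i,j) * exp z + B $$ (i,j) * exp (-z) + C $$ (i,j) * exp 0)"
    unfolding e by (intro sums_add sums_mult exp_sums')
  hence "(\<Sum>n. (M ^\<^sub>m n) $$ (i,j) / of_nat (fact n)) = A $$ (i,j) * exp z + B $$ (i,j) * exp (-z) + C $$ (i,j)"
    by (simp add: sums_iff)
  thus "mexp M $$ (i, j) = (exp z \<cdot>\<^sub>m A + exp (-z) \<cdot>\<^sub>m B + C) $$ (i, j)"
    using c i j d by (simp add: mexp_def mult.commute)
qed (use c d in \<open>auto simp: mexp_def\<close>)

definition EZ :: "real \<Rightarrow> complex mat" where
 "EZ t = mat_of_rows_list 3 [[cis (-t),0,0],[0,1,0],[0,0,cis t]]"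
definition EY :: "real \<Rightarrow> complex mat" where
 "EY t = mat_of_rows_list 3
   [[(1 + cos t)/2, - sin t / sqrt 2, (1 - cos t)/2],
    [sin t / sqrt 2, cos t, - sin t / sqrt 2],
    [(1 - cos t)/2, sin t / sqrt 2, (1 + cos t)/2]]"

lemma cis_ri: "cis b = complex_of_real (cos b) + \<i> * complex_of_real (sin b)"
  by (simp add: complex_eq_iff)

lemma mexpZ: "mexp ((- \<i> * of_real t) \<cdot>\<^sub>m Jz) = EZ t"
proof -
  have "mexp ((- \<i> * of_real t) \<cdot>\<^sub>m Jz) = exp (- \<i> * of_real t) \<cdot>\<^sub>m Qp + exp (-(- \<i> * of_real t)) \<cdot>\<^sub>m Qm + Q0"
    by (rule mexp_split) (auto simp: Jz_pow Qp_def Qm_def Q0_def mat_of_rows_list_def)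
  also have "\<dots> = EZ t"
    apply (rule eq_matI)
    apply (auto simp: EZ_def Qp_def Qm_def Q0_def mat_of_rows_list_def less_Suc_eq numeral_3_eq_3 cis_conv_exp)
    done
  finally show ?thesis .
qed

lemma mexpY: "mexp ((- \<i> * of_real t) \<cdot>\<^sub>m Jy) = EY t"
proof -
  have "mexp ((- \<i> * of_real t) \<cdot>\<^sub>m Jy) = exp (- \<i> * of_real t) \<cdot>\<^sub>m Pp + exp (-(- \<i> * of_real t)) \<cdot>\<^sub>m Pm + P0"
    by (rule mexp_split) (auto simp: Jy_pow Pp_def Pm_def P0_def mat_of_rows_list_def)
  also have "exp (- \<i> * of_real t) = cis (-t)" by (simp add: cis_conv_exp)
  also have "exp (-(- \<i> * of_real t)) = cis t" by (simp add: cis_conv_exp)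
  also have "cis (-t) \<cdot>\<^sub>m Pp + cis t \<cdot>\<^sub>m Pm + P0 = EY t"
    apply (rule eq_matI)
    apply (auto simp: EY_def Pp_def Pm_def P0_def mat_of_rows_list_def less_Suc_eq numeral_3_eq_3 cis_ri)
    apply (auto simp: field_simps s2c s2c')
    done
  finally show ?thesis .
qed
lemma EZ_car[simp]: "EZ t \<in> carrier_mat 3 3" unfolding carrier_mat_def EZ_def mat_of_rows_list_def by simp
lemma EY_car[simp]: "EY t \<in> carrier_mat 3 3" unfolding carrier_mat_def EY_def mat_of_rows_list_def by simp

lemma mult3_entry:
  assumes "A \<in> carrier_mat 3 3" "B \<in> carrier_mat 3 3" "C \<in> carrier_mat 3 3" "i < 3" "j < 3"
  shows "(A * B * C) $$ (i,j) = (\<Sum>p<3. \<Sum>q<3. A $$ (i,p) * B $$ (p,q) * C $$ (q,j))"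
  using assms by (simp add: scalar_prod_def atLeast0LessThan sum_distrib_left mult.assoc)


definition mk :: "nat \<Rightarrow> nat \<Rightarrow> complex" where "mk k l = (if (k = 0) = (l = 0) then 1 else 0)"

lemma Pfun_sum:
  assumes "U1 \<in> carrier_mat 3 3" "U2 \<in> carrier_mat 3 3"
  shows "Pfun U1 U2 = (\<Sum>k<3. \<Sum>l<3. U2 $$ (1,k) * (mk k l * (U1 $$ (k,0) * cnj (U1 $$ (l,0)))) * cnj (U2 $$ (1,l)))"
  using assms
  apply (simp add: Pfun_def meas_def proj_def adj_def mk_def scalar_prod_def numeral_3_eq_3 lessThan_Suc atLeast0LessThan)
  apply (simp add: algebra_simps)
  done
definition uu :: "nat \<Rightarrow> real^6 \<Rightarrow> complex" where
  "uu k x = (\<Sum>p<3. \<Sum>q<3. EY (x$4) $$ (1,p) * EZ (x$5) $$ (p,q) * EY (x$6) $$ (q,k))"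
definition vv :: "nat \<Rightarrow> real^6 \<Rightarrow> complex" where
  "vv k x = (\<Sum>p<3. \<Sum>q<3. EZ (x$1) $$ (k,p) * EY (x$2) $$ (p,q) * EZ (x$3) $$ (q,0))"
definition GG :: "real^6 \<Rightarrow> complex" where
  "GG x = (\<Sum>k<3. \<Sum>l<3. uu k x * (mk k l * (vv k x * cnj (vv l x))) * cnj (uu l x))"

lemma L3_GG: "L3 x = GG x"
proof -
  have "L3 x = Pfun (EZ (x$1) * EY (x$2) * EZ (x$3)) (EY (x$4) * EZ (x$5) * EY (x$6))"
    unfolding L3_def Zrot_def Yrot_def mexpZ mexpY by (rule refl)
  also have "\<dots> = GG x"
    unfolding GG_def uu_def vv_def
    by (subst Pfun_sum) (auto intro!: sum.cong mult_carrier_mat[of _ 3 3 _ 3] simp: mult3_entry)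
  finally show ?thesis .
qed
definition yr :: "nat \<Rightarrow> nat \<Rightarrow> real \<Rightarrow> real" where
  "yr i j t = [[(1 + cos t)/2, - sin t / sqrt 2, (1 - cos t)/2],
    [sin t / sqrt 2, cos t, - sin t / sqrt 2],
    [(1 - cos t)/2, sin t / sqrt 2, (1 + cos t)/2]] ! i ! j"
definition yrd :: "nat \<Rightarrow> nat \<Rightarrow> real \<Rightarrow> real" where
  "yrd i j t = [[- sin t/2, - cos t / sqrt 2, sin t/2],
    [cos t / sqrt 2, - sin t, - cos t / sqrt 2],
    [sin t/2, cos t / sqrt 2, - sin t/2]] ! i ! j"
definition zc :: "nat \<Rightarrow> nat \<Rightarrow> real \<Rightarrow> complex" where
  "zc i j t = [[cis (-t),0,0],[0,1,0],[0,0,cis t]] ! i ! j"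
definition zcd :: "nat \<Rightarrow> nat \<Rightarrow> real \<Rightarrow> complex" where
  "zcd i j t = [[- \<i> * cis (-t),0,0],[0,0,0],[0,0,\<i> * cis t]] ! i ! j"

lemma EY_entry: "i < 3 \<Longrightarrow> j < 3 \<Longrightarrow> EY t $$ (i,j) = of_real (yr i j t)"
  by (auto simp: EY_def yr_def mat_of_rows_list_def less_Suc_eq numeral_3_eq_3)
lemma EZ_entry: "i < 3 \<Longrightarrow> j < 3 \<Longrightarrow> EZ t $$ (i,j) = zc i j t"
  by (auto simp: EZ_def zc_def mat_of_rows_list_def less_Suc_eq numeral_3_eq_3)

lemma yr_deriv: "i < 3 \<Longrightarrow> j < 3 \<Longrightarrow> (yr i j has_real_derivative yrd i j t) (at t)"
  apply (auto simp: less_Suc_eq numeral_3_eq_3)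
  apply (auto simp: yr_def[abs_def] yrd_def intro!: derivative_eq_intros)
  apply (simp_all add: field_simps)
  done

lemma cis_vd: "((\<lambda>t. cis (c * t)) has_vector_derivative (\<i> * of_real c * cis (c * t))) (at t)"
proof -
  have "((\<lambda>z. exp (\<i> * of_real c * z)) has_field_derivative (\<i> * of_real c * exp (\<i> * of_real c * of_real t))) (at (of_real t))"
    by (auto intro!: derivative_eq_intros)
  from has_vector_derivative_real_field[OF this]
  have "((\<lambda>x. exp (\<i> * of_real c * of_real x)) has_vector_derivative (\<i> * of_real c * exp (\<i> * of_real c * of_real t))) (at t)" .
  thus ?thesis by (simp add: cis_conv_exp mult.assoc)
qed

lemma zc_deriv: "i < 3 \<Longrightarrow> j < 3 \<Longrightarrow> (zc i j has_vector_derivative zcd i j t) (at t)"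
proof -
  have m: "((\<lambda>t. cis (-t)) has_vector_derivative (- \<i> * cis (-t))) (at t)"
    using cis_vd[of "-1" t] by simp
  have p: "((\<lambda>t. cis t) has_vector_derivative (\<i> * cis t)) (at t)"
    using cis_vd[of "1" t] by simp
  show "i < 3 \<Longrightarrow> j < 3 \<Longrightarrow> ?thesis"
    using m p by (auto simp: less_Suc_eq numeral_3_eq_3) (auto simp: zc_def[abs_def] zcd_def intro!: derivative_eq_intros)
qed

lemma vec_nth_der: "((\<lambda>x::real^6. x $ k) has_derivative (\<lambda>h. h $ k)) F"
  by (rule bounded_linear_imp_has_derivative) (rule bounded_linear_vec_nth)

lemma chY: "i < 3 \<Longrightarrow> j < 3 \<Longrightarrow>
  ((\<lambda>x::real^6. EY (x$k) $$ (i,j)) has_derivative (\<lambda>h. of_real (h$k * yrd i j (x$k)))) (at x)"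
proof -
  assume ij: "i < 3" "j < 3"
  have "((\<lambda>x::real^6. yr i j (x$k)) has_derivative (\<lambda>h. h$k * yrd i j (x$k))) (at x)"
    by (rule DERIV_compose_FDERIV[OF yr_deriv[OF ij] vec_nth_der])
  hence "((\<lambda>x::real^6. of_real (yr i j (x$k)) :: complex) has_derivative (\<lambda>h. of_real (h$k * yrd i j (x$k)))) (at x)"
    by (rule bounded_linear.has_derivative[OF bounded_linear_of_real])
  thus ?thesis using ij by (simp add: EY_entry)
qed

lemma chZ: "i < 3 \<Longrightarrow> j < 3 \<Longrightarrow>
  ((\<lambda>x::real^6. EZ (x$k) $$ (i,j)) has_derivative (\<lambda>h. of_real (h$k) * zcd i j (x$k))) (at x)"
proof -
  assume ij: "i < 3" "j < 3"
  have "((\<lambda>x::real^6. zc i j (x$k)) has_derivative (\<lambda>h. (h$k) *\<^sub>R zcd i j (x$k))) (at x)"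
    using has_derivative_compose[OF vec_nth_der zc_deriv[OF ij, unfolded has_vector_derivative_def]] .
  thus ?thesis using ij by (simp add: EZ_entry scaleR_conv_of_real)
qed
definition uud :: "nat \<Rightarrow> real^6 \<Rightarrow> real^6 \<Rightarrow> complex" where
  "uud k x h = (\<Sum>p<3. \<Sum>q<3.
      of_real (h$4 * yrd 1 p (x$4)) * EZ (x$5) $$ (p,q) * EY (x$6) $$ (q,k)
    + EY (x$4) $$ (1,p) * (of_real (h$5) * zcd p q (x$5)) * EY (x$6) $$ (q,k)
    + EY (x$4) $$ (1,p) * EZ (x$5) $$ (p,q) * of_real (h$6 * yrd q k (x$6)))"
definition vvd :: "nat \<Rightarrow> real^6 \<Rightarrow> real^6 \<Rightarrow> complex" where
  "vvd k x h = (\<Sum>p<3. \<Sum>q<3.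
      of_real (h$1) * zcd k p (x$1) * EY (x$2) $$ (p,q) * EZ (x$3) $$ (q,0)
    + EZ (x$1) $$ (k,p) * of_real (h$2 * yrd p q (x$2)) * EZ (x$3) $$ (q,0)
    + EZ (x$1) $$ (k,p) * EY (x$2) $$ (p,q) * (of_real (h$3) * zcd q 0 (x$3)))"
definition GGd :: "real^6 \<Rightarrow> real^6 \<Rightarrow> complex" where
  "GGd x h = (\<Sum>k<3. \<Sum>l<3.
      uud k x h * (mk k l * (vv k x * cnj (vv l x))) * cnj (uu l x)
    + uu k x * (mk k l * (vvd k x h * cnj (vv l x) + vv k x * cnj (vvd l x h))) * cnj (uu l x)
    + uu k x * (mk k l * (vv k x * cnj (vv l x))) * cnj (uud l x h))"

lemma uu_der: "k < 3 \<Longrightarrow> (uu k has_derivative uud k x) (at x)"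
  unfolding uu_def[abs_def] uud_def[abs_def]
  apply (intro has_derivative_sum)
  apply (rule derivative_eq_intros chY chZ | simp)+
  apply (rule ext)
  apply (simp add: algebra_simps)
  done

lemma vv_der: "k < 3 \<Longrightarrow> (vv k has_derivative vvd k x) (at x)"
  unfolding vv_def[abs_def] vvd_def[abs_def]
  apply (intro has_derivative_sum)
  apply (rule derivative_eq_intros chY chZ | simp)+
  apply (rule ext)
  apply (simp add: algebra_simps)
  done

lemma GG_der: "(GG has_derivative GGd x) (at x)"
  unfolding GG_def[abs_def] GGd_def[abs_def]
  apply (intro has_derivative_sum)
  apply (rule derivative_eq_intros uu_der vv_der | simp)+
  apply (rule ext)
  apply (simp add: algebra_simps)
  done
lemmas U3 = lessThan_Suc numeral_3_eq_3 mat_of_rows_list_def EY_def EZ_def yrd_def zcd_def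

lemma uu0: "x$4 = 0 \<Longrightarrow> x$6 = 0 \<Longrightarrow> uu 0 x = 0 \<and> uu 1 x = 1 \<and> uu 2 x = 0"
  by (simp add: uu_def U3)

lemma uud4: "x$4 = 0 \<Longrightarrow> x$6 = 0 \<Longrightarrow>
   uud 0 x (axis 4 1) = cis (- (x$5)) / sqrt 2 \<and> uud 1 x (axis 4 1) = 0 \<and> uud 2 x (axis 4 1) = - cis (x$5) / sqrt 2"
  by (simp add: uud_def U3 axis_def)

lemma uud6: "x$4 = 0 \<Longrightarrow> x$6 = 0 \<Longrightarrow>
   uud 0 x (axis 6 1) = 1 / sqrt 2 \<and> uud 1 x (axis 6 1) = 0 \<and> uud 2 x (axis 6 1) = - 1 / sqrt 2"
  by (simp add: uud_def U3 axis_def)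

lemma uud2: "uud 0 x (axis 2 1) = 0 \<and> uud 1 x (axis 2 1) = 0 \<and> uud 2 x (axis 2 1) = 0"
  by (simp add: uud_def U3 axis_def)

lemma vvd46: "vvd k x (axis 4 1) = 0 \<and> vvd k x (axis 6 1) = 0"
  by (simp add: vvd_def axis_def)

lemma vv_val: "vv 0 x = cis (- (x$1)) * ((1 + cos (x$2))/2) * cis (- (x$3)) \<and>
   vv 1 x = sin (x$2) / sqrt 2 * cis (- (x$3)) \<and>
   vv 2 x = cis (x$1) * ((1 - cos (x$2))/2) * cis (- (x$3))"
  by (simp add: vv_def U3)

lemma vvd2: "vvd 1 x (axis 2 1) = cos (x$2) / sqrt 2 * cis (- (x$3))"
  by (simp add: vvd_def U3 axis_def)
lemma sum3: "(\<Sum>k<3. f k) = f 0 + f 1 + (f (2::nat) :: complex)"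
  by (simp add: numeral_3_eq_3 numeral_2_eq_2 lessThan_Suc ac_simps)

lemma trigX: "2 * (cos a * (cos a * X)) + 2 * (sin a * (sin a * X)) = X * (2::real)"
proof -
  have t1: "2 * (c * (c * X)) + 2 * (s * (s * X)) = 2 * X * (c * c + s * (s::real))" for c s
    by (simp add: algebra_simps)
  have "2 * (cos a * (cos a * X)) + 2 * (sin a * (sin a * X)) = 2 * X * (cos a * cos a + sin a * sin a)"
    by (rule t1)
  also have "2 * X * (cos a * cos a + sin a * sin a) = X * 2" by (simp add: sin_cos_squared_add3)
  finally show ?thesis .
qed

lemma GGd2: "x$4 = 0 \<Longrightarrow> x$6 = 0 \<Longrightarrow> GGd x (axis 2 1) = of_real (sin (x$2) * cos (x$2))"
  apply (unfold GGd_def sum3)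
  apply (simp only: uu0 uud2 vv_val vvd2)
  apply (simp add: mk_def cis_cnj)
  apply (simp add: cis_ri complex_eq_iff)
  by (simp add: trigX mult.commute)
lemma vv_val': "vv 0 x = of_real ((1 + cos (x$2))/2) * cis (- (x$1) - x$3) \<and>
   vv 1 x = of_real (sin (x$2) / sqrt 2) * cis (- (x$3)) \<and>
   vv 2 x = of_real ((1 - cos (x$2))/2) * cis (x$1 - x$3)"
proof -
  have e1: "cis (- (x$1) - x$3) = cis (- (x$1)) * cis (- (x$3))" by (simp add: cis_mult)
  have e2: "cis (x$1 - x$3) = cis (x$1) * cis (- (x$3))" by (simp add: cis_mult)
  show ?thesis unfolding e1 e2 using vv_val[of x] by (simp add: mult_ac)
qed

lemma pc: "(of_real A * cis p) * cnj (of_real B * cis q) = of_real (A*B) * cis (p - q)"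
proof -
  have "(of_real A * cis p) * cnj (of_real B * cis q) = of_real A * of_real B * (cis p * cis (-q))"
    by (simp add: cis_cnj mult_ac)
  also have "cis p * cis (-q) = cis (p - q)" by (simp add: cis_mult)
  finally show ?thesis by simp
qed

lemma r4: "sqrt 2 * 2 * sqrt 2 = (4::real)" "sqrt 2 * (2 * sqrt 2) = (4::real)"
  by (simp_all add: mult_ac)

lemma GGd4: "x$4 = 0 \<Longrightarrow> x$6 = 0 \<Longrightarrow> GGd x (axis 4 1) = of_real (- sin (x$2) * (1 - cos (x$2)) * cos (x$1 + x$5) / 2)"
  apply (unfold GGd_def sum3)
  apply (simp only: uu0 uud4 vv_val' vvd46 pc)
  apply (simp add: mk_def cis_cnj)
  apply (simp add: cis_ri complex_eq_iff cos_add r4)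
  apply (simp add: algebra_simps)
  apply (simp add: field_simps)
  done

lemma GGd6: "x$4 = 0 \<Longrightarrow> x$6 = 0 \<Longrightarrow> GGd x (axis 6 1) = of_real (- sin (x$2) * (1 - cos (x$2)) * cos (x$1) / 2)"
  apply (unfold GGd_def sum3)
  apply (simp only: uu0 uud6 vv_val' vvd46 pc)
  apply (simp add: mk_def cis_cnj)
  apply (simp add: cis_ri complex_eq_iff cos_add r4)
  done
theorem lemma3:
  fixes x :: "real^6"
  assumes "- pi < x$1" "x$1 \<le> pi" "0 < x$2" "x$2 < pi" "- pi < x$3" "x$3 \<le> pi"
      and "- pi < x$4" "x$4 \<le> pi" "0 < x$5" "x$5 < pi" "- pi < x$6" "x$6 \<le> pi"
      and "x$4 = 0" "x$6 = 0"
  shows "\<exists>D. (L3 has_derivative D) (at x) \<and> D \<noteq> (\<lambda>h. 0)"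
proof (intro exI conjI)
  have "L3 = GG" using L3_GG by (rule ext)
  thus "(L3 has_derivative GGd x) (at x)" using GG_der by simp
  show "GGd x \<noteq> (\<lambda>h. 0)"
  proof
    assume z: "GGd x = (\<lambda>h. 0)"
    have sb: "sin (x$2) > 0" using assms by (intro sin_gt_zero) auto
    have s5: "sin (x$5) > 0" using assms by (intro sin_gt_zero) auto
    have "sin (x$2) * cos (x$2) = 0" using GGd2[OF assms(13,14)] z by simp
    hence cb: "cos (x$2) = 0" using sb by simp
    have "complex_of_real (- sin (x$2) * (1 - cos (x$2)) * cos (x$1) / 2) = 0" using GGd6[OF assms(13,14)] z
      by simp
    hence "- sin (x$2) * (1 - cos (x$2)) * cos (x$1) / 2 = 0" by (simp only: of_real_eq_0_iff)
    hence c1: "cos (x$1) = 0" using sb cb by simp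
    have "complex_of_real (- sin (x$2) * (1 - cos (x$2)) * cos (x$1 + x$5) / 2) = 0" using GGd4[OF assms(13,14)] z
      by simp
    hence "- sin (x$2) * (1 - cos (x$2)) * cos (x$1 + x$5) / 2 = 0" by (simp only: of_real_eq_0_iff)
    hence "cos (x$1 + x$5) = 0" using sb cb by simp
    hence "sin (x$1) * sin (x$5) = 0" using c1 by (simp add: cos_add)
    hence "sin (x$1) = 0" using s5 by simp
    thus False using c1 sin_cos_squared_add[of "x$1"] by simp
  qed
qed
end
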